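(* Let $G$ be a graph with at least two vertices and let $u$ be a universal vertex of $G$. Then $\tilde\gamma_{gr}^{\times 2}(G)=\tilde\gamma_{gr}^{\times 2}(G-u)+a(G-u)$ (where, since $G$ has no isolated vertices, $\tilde\gamma_{gr}^{\times 2}(G)=\gamma_{gr}^{\times 2}(G)$). Moreover, if $a(G-u)=0$, every GDDS of $G-u$ is a GDDS of $G$; and if $a(G-u)=1$ and $S$ is an MDNS of $G-u$, then $S\oplus(u)$ is an MDNS of $G$.
   Context: Graphs are finite, simple, undirected; $N[v]$ is the closed neighborhood; $u$ is universal if $N[u]=V(G)$. A sequence $S=(v_1,\dots,v_k)$ of distinct vertices of $G$ is a double neighborhood sequence (DNS) if for each $i$ some $u\in N[v_i]$ satisfies $|\{j<i: u\in N[v_j]\}|\le 1$. A maximum double neighborhood sequence (MDNS) is a DNS of maximum length, and $\tilde\gamma_{gr}^{\times 2}(G)$ denotes this length. A double dominating sequence (DDS) is a DNS whose vertex set $D$ satisfies $|N[w]\cap D|\ge 2$ for all $w$; for graphs without isolated vertices a Grundy double dominating sequence (GDDS) is a DDS of maximum length, of length $\gamma_{gr}^{\times 2}(G)$. $a(G)=1$ if $G$ has an isolated vertex and $a(G)=0$ otherwise. $S\oplus(u)$ denotes the sequence $S$ followed by $u$. *)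

theory Defs
  imports Main
begin

text \<open>A graph is given by a finite vertex set V and a symmetric irreflexive
adjacency relation E; only edges between vertices of V count.
The graph G - u is (V - {u}, E).\<close>

definition graph :: "'a set \<Rightarrow> ('a \<Rightarrow> 'a \<Rightarrow> bool) \<Rightarrow> bool" where
  "graph V E \<longleftrightarrow> finite V \<and> (\<forall>x. \<not> E x x) \<and> (\<forall>x y. E x y \<longrightarrow> E y x)"

definition cnbh :: "'a set \<Rightarrow> ('a \<Rightarrow> 'a \<Rightarrow> bool) \<Rightarrow> 'a \<Rightarrow> 'a set" where
  "cnbh V E v = {w \<in> V. w = v \<or> E v w}"

definition universal :: "'a set \<Rightarrow> ('a \<Rightarrow> 'a \<Rightarrow> bool) \<Rightarrow> 'a \<Rightarrow> bool" where
  "universal V E u \<longleftrightarrow> u \<in> V \<and> cnbh V E u = V"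

definition is_DNS :: "'a set \<Rightarrow> ('a \<Rightarrow> 'a \<Rightarrow> bool) \<Rightarrow> 'a list \<Rightarrow> bool" where
  "is_DNS V E S \<longleftrightarrow> distinct S \<and> set S \<subseteq> V \<and>
     (\<forall>i < length S. \<exists>x \<in> cnbh V E (S ! i).
        card {j. j < i \<and> x \<in> cnbh V E (S ! j)} \<le> 1)"

definition is_MDNS :: "'a set \<Rightarrow> ('a \<Rightarrow> 'a \<Rightarrow> bool) \<Rightarrow> 'a list \<Rightarrow> bool" where
  "is_MDNS V E S \<longleftrightarrow> is_DNS V E S \<and> (\<forall>T. is_DNS V E T \<longrightarrow> length T \<le> length S)"

definition tgr2 :: "'a set \<Rightarrow> ('a \<Rightarrow> 'a \<Rightarrow> bool) \<Rightarrow> nat" where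
  "tgr2 V E = Max {length S | S. is_DNS V E S}"

definition is_DDS :: "'a set \<Rightarrow> ('a \<Rightarrow> 'a \<Rightarrow> bool) \<Rightarrow> 'a list \<Rightarrow> bool" where
  "is_DDS V E S \<longleftrightarrow> is_DNS V E S \<and> (\<forall>w \<in> V. card (cnbh V E w \<inter> set S) \<ge> 2)"

definition is_GDDS :: "'a set \<Rightarrow> ('a \<Rightarrow> 'a \<Rightarrow> bool) \<Rightarrow> 'a list \<Rightarrow> bool" where
  "is_GDDS V E S \<longleftrightarrow> is_DDS V E S \<and> (\<forall>T. is_DDS V E T \<longrightarrow> length T \<le> length S)"

definition gr2 :: "'a set \<Rightarrow> ('a \<Rightarrow> 'a \<Rightarrow> bool) \<Rightarrow> nat" where
  "gr2 V E = Max {length S | S. is_DDS V E S}"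

definition isol :: "'a set \<Rightarrow> ('a \<Rightarrow> 'a \<Rightarrow> bool) \<Rightarrow> nat" where
  "isol V E = (if \<exists>v \<in> V. cnbh V E v = {v} then 1 else 0)"

end

theory Submission
  imports Defs
begin

lemma cnbh_sym:
  assumes "graph V E" "x \<in> V" "y \<in> V"
  shows "(x \<in> cnbh V E y) = (y \<in> cnbh V E x)"
  using assms by (auto simp: graph_def cnbh_def)

lemma cnbh_sub: "cnbh V E x \<subseteq> V"
  by (auto simp: cnbh_def)

lemma cnbh_self: "x \<in> V \<Longrightarrow> x \<in> cnbh V E x"
  by (auto simp: cnbh_def)

lemma cnbh_minus: "cnbh (V - {u}) E v = cnbh V E v - {u}"
  by (auto simp: cnbh_def)

lemma cnt_eq:
  assumes g: "graph V E" and d: "distinct S" and s: "set S \<subseteq> V" and x: "x \<in> V"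
    and i: "i \<le> length S"
  shows "card {j. j < i \<and> x \<in> cnbh V E (S!j)} = card (cnbh V E x \<inter> set (take i S))"
proof -
  have inj: "inj_on (nth S) {j. j < i \<and> x \<in> cnbh V E (S!j)}"
    using d i by (auto simp: inj_on_def nth_eq_iff_index_eq)
  have "(nth S) ` {j. j < i \<and> x \<in> cnbh V E (S!j)} = cnbh V E x \<inter> set (take i S)"
  proof
    show "(nth S) ` {j. j < i \<and> x \<in> cnbh V E (S!j)} \<subseteq> cnbh V E x \<inter> set (take i S)"
    proof
      fix y assume "y \<in> (nth S) ` {j. j < i \<and> x \<in> cnbh V E (S!j)}"
      then obtain j where j: "j < i" "x \<in> cnbh V E (S!j)" "y = S!j" by auto
      have "S!j \<in> V" using s j i by (simp add: subset_iff)
      then have "y \<in> cnbh V E x" using cnbh_sym[OF g x, of "S!j"] j by blast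
      moreover have "y \<in> set (take i S)"
      proof -
        have "j < length (take i S)" using j i by simp
        moreover have "take i S ! j = y" using j by simp
        ultimately show ?thesis by (metis nth_mem)
      qed
      ultimately show "y \<in> cnbh V E x \<inter> set (take i S)" by auto
    qed
    show "cnbh V E x \<inter> set (take i S) \<subseteq> (nth S) ` {j. j < i \<and> x \<in> cnbh V E (S!j)}"
    proof
      fix y assume y: "y \<in> cnbh V E x \<inter> set (take i S)"
      then have "y \<in> set (take i S)" by blast
      then obtain j where j0: "j < length (take i S)" "y = take i S ! j"
        unfolding in_set_conv_nth by blast
      have ji: "j < i" using j0(1) by simp
      have "take i S ! j = S ! j" using ji by (rule nth_take)
      then have j: "j < i" "y = S!j" using ji j0(2) by simp_all
      have "y \<in> V" using y subsetD[OF cnbh_sub[of V E x]] by blast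
      then have "x \<in> cnbh V E (S!j)" using cnbh_sym[OF g x, of y] y j by blast
      then show "y \<in> (nth S) ` {j. j < i \<and> x \<in> cnbh V E (S!j)}" using j by auto
    qed
  qed
  then show ?thesis using card_image[OF inj] by simp
qed

lemma DNS_alt:
  assumes g: "graph V E"
  shows "is_DNS V E S \<longleftrightarrow> distinct S \<and> set S \<subseteq> V \<and>
     (\<forall>i < length S. \<exists>x \<in> cnbh V E (S ! i). card (cnbh V E x \<inter> set (take i S)) \<le> 1)"
proof (cases "distinct S \<and> set S \<subseteq> V")
  case True
  have eq: "\<And>i x. i < length S \<Longrightarrow> x \<in> cnbh V E (S ! i) \<Longrightarrow>
     card {j. j < i \<and> x \<in> cnbh V E (S!j)} = card (cnbh V E x \<inter> set (take i S))"
  proof -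
    fix i x assume i: "i < length S" and x: "x \<in> cnbh V E (S ! i)"
    have xV: "x \<in> V" using x subsetD[OF cnbh_sub[of V E "S ! i"]] by blast
    show "card {j. j < i \<and> x \<in> cnbh V E (S!j)} = card (cnbh V E x \<inter> set (take i S))"
      using cnt_eq[OF g _ _ xV, of S i] True i by simp
  qed
  show ?thesis unfolding is_DNS_def
  proof (intro iffI conjI allI impI)
    fix i assume a: "distinct S \<and> set S \<subseteq> V \<and> (\<forall>i<length S. \<exists>x\<in>cnbh V E (S ! i). card {j. j < i \<and> x \<in> cnbh V E (S ! j)} \<le> 1)"
      and i: "i < length S"
    then obtain x where "x \<in> cnbh V E (S ! i)" "card {j. j < i \<and> x \<in> cnbh V E (S ! j)} \<le> 1" by blast
    then show "\<exists>x\<in>cnbh V E (S ! i). card (cnbh V E x \<inter> set (take i S)) \<le> 1" using eq[OF i] by auto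
  next
    fix i assume a: "distinct S \<and> set S \<subseteq> V \<and> (\<forall>i<length S. \<exists>x\<in>cnbh V E (S ! i). card (cnbh V E x \<inter> set (take i S)) \<le> 1)"
      and i: "i < length S"
    then obtain x where "x \<in> cnbh V E (S ! i)" "card (cnbh V E x \<inter> set (take i S)) \<le> 1" by blast
    then show "\<exists>x\<in>cnbh V E (S ! i). card {j. j < i \<and> x \<in> cnbh V E (S ! j)} \<le> 1" using eq[OF i] by auto
  qed (use True in auto)
next
  case False
  then show ?thesis unfolding is_DNS_def by blast
qed

lemma DNS_snoc:
  assumes g: "graph V E"
  shows "is_DNS V E (T @ [w]) \<longleftrightarrow> is_DNS V E T \<and> w \<notin> set T \<and> w \<in> V \<and>
    (\<exists>x \<in> cnbh V E w. card (cnbh V E x \<inter> set T) \<le> 1)"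
proof -
  have "(\<forall>i < length (T@[w]). \<exists>x \<in> cnbh V E ((T@[w]) ! i). card (cnbh V E x \<inter> set (take i (T@[w]))) \<le> 1)
    \<longleftrightarrow> (\<forall>i < length T. \<exists>x \<in> cnbh V E (T ! i). card (cnbh V E x \<inter> set (take i T)) \<le> 1)
      \<and> (\<exists>x \<in> cnbh V E w. card (cnbh V E x \<inter> set T) \<le> 1)"
    by (simp add: All_less_Suc nth_append) blast
  moreover have "distinct (T@[w]) \<longleftrightarrow> distinct T \<and> w \<notin> set T" by simp
  moreover have "set (T@[w]) \<subseteq> V \<longleftrightarrow> set T \<subseteq> V \<and> w \<in> V" by auto
  ultimately show ?thesis unfolding DNS_alt[OF g] by blast
qed

lemma DNS_Nil: "is_DNS V E []"
  by (simp add: is_DNS_def)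

lemma DNS_len: "is_DNS V E S \<Longrightarrow> finite V \<Longrightarrow> length S \<le> card V"
  unfolding is_DNS_def by (metis card_mono distinct_card)

lemma tgr2_props:
  assumes g: "graph V E"
  shows "(\<exists>S. is_DNS V E S \<and> length S = tgr2 V E) \<and> (\<forall>S. is_DNS V E S \<longrightarrow> length S \<le> tgr2 V E)"
proof -
  let ?L = "{length S | S. is_DNS V E S}"
  have fin: "finite V" using g by (simp add: graph_def)
  have "?L \<subseteq> {..card V}" using DNS_len[OF _ fin] by auto
  then have f: "finite ?L" using finite_subset by blast
  have ne: "?L \<noteq> {}" using DNS_Nil by blast
  from Max_in[OF f ne] have "\<exists>S. is_DNS V E S \<and> length S = tgr2 V E" unfolding tgr2_def by auto
  moreover have "\<forall>S. is_DNS V E S \<longrightarrow> length S \<le> tgr2 V E"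
    unfolding tgr2_def using Max_ge[OF f] by blast
  ultimately show ?thesis by blast
qed

definition noiso :: "'a set \<Rightarrow> ('a \<Rightarrow> 'a \<Rightarrow> bool) \<Rightarrow> bool" where
  "noiso W E \<longleftrightarrow> (\<forall>v\<in>W. \<exists>w\<in>W. E v w)"

lemma extend:
  assumes g: "graph W E" and n: "noiso W E" and T: "is_DNS W E T" and z: "z \<in> W"
    and c: "card (cnbh W E z \<inter> set T) \<le> 1"
  shows "\<exists>w. is_DNS W E (T @ [w])"
proof -
  obtain y where y: "y \<in> W" "E z y" using n z by (auto simp: noiso_def)
  have zy: "z \<noteq> y" using y g by (auto simp: graph_def)
  have sub: "{z, y} \<subseteq> cnbh W E z" using y z by (auto simp: cnbh_def)
  have "\<not> {z, y} \<subseteq> set T"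
  proof
    assume "{z, y} \<subseteq> set T"
    then have "{z, y} \<subseteq> cnbh W E z \<inter> set T" using sub by auto
    then have "card {z, y} \<le> card (cnbh W E z \<inter> set T)" by (intro card_mono) auto
    then show False using zy c by simp
  qed
  then obtain w where w: "w \<in> {z, y}" "w \<notin> set T" by auto
  have wW: "w \<in> W" using w y z by auto
  have "w \<in> cnbh W E z" using w sub by auto
  then have "z \<in> cnbh W E w" using cnbh_sym[OF g z wW] by simp
  then have "is_DNS W E (T @ [w])" using DNS_snoc[OF g] T w wW c by blast
  then show ?thesis by blast
qed

lemma MDNS_DDS:
  assumes g: "graph W E" and n: "noiso W E" and S: "is_DNS W E S"
    and m: "\<forall>T. is_DNS W E T \<longrightarrow> length T \<le> length S"
  shows "is_DDS W E S"
  unfolding is_DDS_def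
proof (intro conjI ballI S)
  fix w assume w: "w \<in> W"
  show "card (cnbh W E w \<inter> set S) \<ge> 2"
  proof (rule ccontr)
    assume "\<not> ?thesis"
    then have "card (cnbh W E w \<inter> set S) \<le> 1" by simp
    then obtain x where "is_DNS W E (S @ [x])" using extend[OF g n S w] by blast
    then show False using m by force
  qed
qed

lemma gr2_eq:
  assumes g: "graph W E" and n: "noiso W E"
  shows "gr2 W E = tgr2 W E \<and> (\<exists>S. is_DDS W E S \<and> length S = tgr2 W E)"
proof -
  obtain S where S: "is_DNS W E S" "length S = tgr2 W E" using tgr2_props[OF g] by blast
  have m: "\<forall>T. is_DNS W E T \<longrightarrow> length T \<le> length S" using tgr2_props[OF g] S by auto
  have D: "is_DDS W E S" using MDNS_DDS[OF g n S(1) m] .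
  let ?L = "{length S | S. is_DDS W E S}"
  have "?L \<subseteq> {..length S}" using m by (auto simp: is_DDS_def)
  then have f: "finite ?L" using finite_subset by blast
  have "length S \<in> ?L" using D by blast
  moreover have "Max ?L \<le> length S"
  proof -
    have "Max ?L \<in> ?L" using f \<open>length S \<in> ?L\<close> by (intro Max_in) auto
    then obtain T where "is_DDS W E T" "Max ?L = length T" by blast
    then show ?thesis using m by (simp add: is_DDS_def)
  qed
  ultimately have "gr2 W E = length S" unfolding gr2_def
    using f by (meson Max_ge antisym)
  then have "gr2 W E = tgr2 W E" using S(2) by simp
  then show ?thesis using S D by blast
qed

lemma graph_minus: "graph V E \<Longrightarrow> graph (V - {u}) E"
  by (simp add: graph_def)

lemma lift:
  assumes a: "is_DNS (V - {u}) E S"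
  shows "is_DNS V E S"
  unfolding is_DNS_def
proof (intro conjI allI impI)
  show "distinct S" using a by (simp add: is_DNS_def)
  show "set S \<subseteq> V" using a by (auto simp: is_DNS_def)
  fix i assume i: "i < length S"
  then obtain x where x: "x \<in> cnbh (V - {u}) E (S ! i)"
    "card {j. j < i \<and> x \<in> cnbh (V - {u}) E (S!j)} \<le> 1"
    using a unfolding is_DNS_def by blast
  have eq: "{j. j < i \<and> x \<in> cnbh V E (S!j)} = {j. j < i \<and> x \<in> cnbh (V - {u}) E (S!j)}"
    using x(1) by (auto simp: cnbh_minus)
  have xi: "x \<in> cnbh V E (S ! i)" using x(1) by (simp add: cnbh_minus)
  have "card {j. j < i \<and> x \<in> cnbh V E (S!j)} \<le> 1" unfolding eq using x(2) .
  then show "\<exists>x\<in>cnbh V E (S ! i). card {j. j < i \<and> x \<in> cnbh V E (S ! j)} \<le> 1"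
    using xi by blast
qed

lemma univ_in: "universal V E u \<Longrightarrow> graph V E \<Longrightarrow> x \<in> V \<Longrightarrow> u \<in> cnbh V E x"
proof -
  assume a: "universal V E u" "graph V E" "x \<in> V"
  then have "u \<in> V" "x \<in> cnbh V E u" by (auto simp: universal_def)
  then show ?thesis using cnbh_sym[OF a(2) a(3)] by blast
qed

lemma remove:
  assumes g: "graph V E" and un: "universal V E u"
  shows "is_DNS V E S \<Longrightarrow> is_DNS (V - {u}) E (filter (\<lambda>x. x \<noteq> u) S)"
proof (induction S rule: rev_induct)
  case Nil
  then show ?case by (simp add: DNS_Nil)
next
  case (snoc w T)
  have g': "graph (V - {u}) E" using graph_minus[OF g] .
  have h: "is_DNS V E T" "w \<notin> set T" "w \<in> V" and
    fx: "\<exists>x \<in> cnbh V E w. card (cnbh V E x \<inter> set T) \<le> 1"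
    using snoc.prems unfolding DNS_snoc[OF g] by blast+
  have IH: "is_DNS (V - {u}) E (filter (\<lambda>x. x \<noteq> u) T)" using snoc.IH h(1) .
  show ?case
  proof (cases "w = u")
    case True
    then show ?thesis using IH by simp
  next
    case False
    have fT: "finite (set T)" by simp
    have "\<exists>x \<in> cnbh (V - {u}) E w. card (cnbh (V - {u}) E x \<inter> set (filter (\<lambda>x. x \<noteq> u) T)) \<le> 1"
    proof -
      obtain x where x: "x \<in> cnbh V E w" "card (cnbh V E x \<inter> set T) \<le> 1" using fx by blast
      show ?thesis
      proof (cases "x = u")
        case True
        have "cnbh V E u \<inter> set T = set T" using un h(1) by (auto simp: universal_def is_DNS_def)
        then have c1: "card (set T) \<le> 1" using x True by simp
        have "w \<in> cnbh (V - {u}) E w" using False h(3) by (auto simp: cnbh_def)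
        moreover have "card (cnbh (V - {u}) E w \<inter> set (filter (\<lambda>x. x \<noteq> u) T)) \<le> card (set T)"
          by (intro card_mono) auto
        ultimately show ?thesis using c1 by (meson le_trans)
      next
        case False
        have "x \<in> cnbh (V - {u}) E w" using x False by (simp add: cnbh_minus)
        moreover have "card (cnbh (V - {u}) E x \<inter> set (filter (\<lambda>x. x \<noteq> u) T)) \<le> card (cnbh V E x \<inter> set T)"
          by (intro card_mono) (auto simp: cnbh_minus)
        ultimately show ?thesis using x by (meson le_trans)
      qed
    qed
    moreover have eq: "filter (\<lambda>x. x \<noteq> u) (T @ [w]) = filter (\<lambda>x. x \<noteq> u) T @ [w]"
      using False by simp
    moreover have "w \<notin> set (filter (\<lambda>x. x \<noteq> u) T)" using h(2) by simp
    moreover have "w \<in> V - {u}" using h(3) False by simp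
    ultimately show ?thesis using IH DNS_snoc[OF g', of "filter (\<lambda>x. x \<noteq> u) T" w] by simp
  qed
qed

lemma zlemma:
  assumes g: "graph V E" and un: "universal V E u" and S: "is_DNS V E S" and uS: "u \<in> set S"
    and ne: "V - {u} \<noteq> {}"
  shows "\<exists>z \<in> V - {u}. card (cnbh (V - {u}) E z \<inter> (set S - {u})) \<le> 1"
proof (cases "length S \<le> 2")
  case True
  obtain z where z: "z \<in> V - {u}" using ne by blast
  have d: "distinct S" using S by (simp add: is_DNS_def)
  have "card (set S - {u}) = card (set S) - 1" using uS by simp
  also have "\<dots> \<le> 1" using True distinct_card[OF d] by simp
  finally have "card (cnbh (V - {u}) E z \<inter> (set S - {u})) \<le> 1"
    using card_mono[of "set S - {u}" "cnbh (V - {u}) E z \<inter> (set S - {u})"] by force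
  then show ?thesis using z by blast
next
  case False
  then obtain T w where Tw: "S = T @ [w]"
    by (metis append_butlast_last_id le0 list.size(3))
  have lT: "length T \<ge> 2" using False Tw by simp
  have h: "is_DNS V E T" "w \<notin> set T" "w \<in> V" and
    fx: "\<exists>x \<in> cnbh V E w. card (cnbh V E x \<inter> set T) \<le> 1"
    using S Tw DNS_snoc[OF g] by auto
  obtain x where x: "x \<in> cnbh V E w" "card (cnbh V E x \<inter> set T) \<le> 1" using fx by blast
  have dT: "distinct T" using h by (simp add: is_DNS_def)
  have xu: "x \<noteq> u"
  proof
    assume "x = u"
    have "cnbh V E u \<inter> set T = set T" using un h(1) by (auto simp: universal_def is_DNS_def)
    then show False using x \<open>x = u\<close> lT distinct_card[OF dT] by simp
  qed
  have xV: "x \<in> V" using x(1) subsetD[OF cnbh_sub[of V E w]] by blast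
  have fin: "finite (cnbh V E x \<inter> set T)" by simp
  show ?thesis
  proof (cases "w = u")
    case True
    have "card (cnbh (V - {u}) E x \<inter> (set S - {u})) \<le> card (cnbh V E x \<inter> set T)"
      using True Tw by (intro card_mono) (auto simp: cnbh_minus)
    then show ?thesis using x xu xV by force
  next
    case False
    have "u \<in> set T" using uS Tw False by simp
    moreover have "u \<in> cnbh V E x" using univ_in[OF un g xV] .
    ultimately have "cnbh V E x \<inter> set T = {u}" using x(2) fin
      using card_le_Suc0_iff_eq[OF fin] by auto
    then have "cnbh (V - {u}) E x \<inter> (set S - {u}) \<subseteq> {w}" using Tw by (auto simp: cnbh_minus)
    then have "card (cnbh (V - {u}) E x \<inter> (set S - {u})) \<le> 1"
      using card_mono[of "{w}"] by fastforce
    then show ?thesis using xu xV by blast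
  qed
qed

lemma snoc_u:
  assumes g: "graph V E" and un: "universal V E u" and S: "is_DNS (V - {u}) E S"
    and w: "w \<in> V - {u}" and cw: "cnbh (V - {u}) E w = {w}"
  shows "is_DNS V E (S @ [u])"
proof -
  have S1: "is_DNS V E S" using lift[OF S] .
  have sS: "set S \<subseteq> V - {u}" using S by (simp add: is_DNS_def)
  have uS: "u \<notin> set S" using sS by blast
  have uV: "u \<in> V" and cu: "cnbh V E u = V" using un by (auto simp: universal_def)
  have wc: "w \<in> cnbh V E u" using cu w by simp
  have "cnbh V E w - {u} = {w}" using cw by (simp add: cnbh_minus)
  then have "cnbh V E w \<inter> set S \<subseteq> {w}" using uS by blast
  then have "card (cnbh V E w \<inter> set S) \<le> card {w}" by (intro card_mono) simp_all
  then have "card (cnbh V E w \<inter> set S) \<le> 1" by simp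
  then have "\<exists>x\<in>cnbh V E u. card (cnbh V E x \<inter> set S) \<le> 1" using wc by blast
  then show ?thesis using DNS_snoc[OF g, of S u] S1 uS uV by blast
qed

lemma filter_len:
  assumes "distinct S" "u \<in> set S"
  shows "length (filter (\<lambda>x. x \<noteq> u) S) + 1 = length S"
proof -
  obtain A B where AB: "S = A @ u # B" using split_list[OF assms(2)] by blast
  have "u \<notin> set A" "u \<notin> set B" using assms(1) AB by auto
  then have "filter (\<lambda>x. x \<noteq> u) A = A" "filter (\<lambda>x. x \<noteq> u) B = B"
    by (auto simp: filter_id_conv)
  then show ?thesis using AB by simp
qed

theorem proposition4:
  fixes V :: "'a set" and E :: "'a \<Rightarrow> 'a \<Rightarrow> bool" and u :: 'a
  assumes "graph V E" and "card V \<ge> 2" and "universal V E u"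
  shows "tgr2 V E = tgr2 (V - {u}) E + isol (V - {u}) E
    \<and> tgr2 V E = gr2 V E
    \<and> (isol (V - {u}) E = 0 \<longrightarrow>
         (\<forall>S. is_GDDS (V - {u}) E S \<longrightarrow> is_GDDS V E S))
    \<and> (isol (V - {u}) E = 1 \<longrightarrow>
         (\<forall>S. is_MDNS (V - {u}) E S \<longrightarrow> is_MDNS V E (S @ [u])))"
proof -
  note g = assms(1) and un = assms(3)
  have g': "graph (V - {u}) E" using graph_minus[OF g] .
  have fin: "finite V" using g by (simp add: graph_def)
  have uV: "u \<in> V" and cu: "cnbh V E u = V" using un by (auto simp: universal_def)
  have ne: "V - {u} \<noteq> {}"
  proof
    assume "V - {u} = {}"
    then have "V = {u}" using uV by blast
    then show False using assms(2) by simp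
  qed
  have Eu: "E u v" if "v \<in> V - {u}" for v
  proof -
    have "v \<in> cnbh V E u" using cu that by simp
    then show ?thesis using that by (simp add: cnbh_def)
  qed
  have symE: "E a b \<Longrightarrow> E b a" for a b using g by (simp add: graph_def)
  have noV: "noiso V E" unfolding noiso_def
  proof
    fix v assume v: "v \<in> V"
    show "\<exists>w\<in>V. E v w"
    proof (cases "v = u")
      case True
      obtain w where "w \<in> V - {u}" using ne by blast
      then show ?thesis using Eu True by blast
    next
      case False
      then have "E v u" using Eu v symE by blast
      then show ?thesis using uV by blast
    qed
  qed
  have iso0: "noiso (V - {u}) E" if "isol (V - {u}) E = 0"
    unfolding noiso_def
  proof
    fix v assume v: "v \<in> V - {u}"
    have "cnbh (V - {u}) E v \<noteq> {v}" using that v by (simp add: isol_def split: if_splits)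
    moreover have "v \<in> cnbh (V - {u}) E v" using v by (simp add: cnbh_def)
    ultimately obtain w where "w \<in> cnbh (V - {u}) E v" "w \<noteq> v" by blast
    then show "\<exists>w\<in>V - {u}. E v w" by (auto simp: cnbh_def)
  qed
  have iso1: "\<exists>w\<in>V - {u}. cnbh (V - {u}) E w = {w}" if "isol (V - {u}) E = 1"
    using that by (simp add: isol_def split: if_splits)
  have iso01: "isol (V - {u}) E = 0 \<or> isol (V - {u}) E = 1" by (simp add: isol_def)
  obtain M' where M': "is_DNS (V - {u}) E M'" "length M' = tgr2 (V - {u}) E"
    using tgr2_props[OF g'] by blast
  have le': "length T \<le> tgr2 (V - {u}) E" if "is_DNS (V - {u}) E T" for T
    using tgr2_props[OF g'] that by blast
  have le: "length T \<le> tgr2 V E" if "is_DNS V E T" for T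
    using tgr2_props[OF g] that by blast
  obtain M where M: "is_DNS V E M" "length M = tgr2 V E"
    using tgr2_props[OF g] by blast
  have bound: "length S \<le> tgr2 (V - {u}) E + isol (V - {u}) E" if S: "is_DNS V E S" for S
  proof -
    let ?S' = "filter (\<lambda>x. x \<noteq> u) S"
    have S': "is_DNS (V - {u}) E ?S'" using remove[OF g un S] .
    show ?thesis
    proof (cases "u \<in> set S")
      case False
      then have "?S' = S" by (auto simp: filter_id_conv)
      then have "length S \<le> tgr2 (V - {u}) E" using le'[OF S'] by simp
      then show ?thesis by simp
    next
      case True
      have dS: "distinct S" using S by (simp add: is_DNS_def)
      have len: "length ?S' + 1 = length S" using filter_len[OF dS True] .
      show ?thesis
      proof (cases "isol (V - {u}) E = 1")
        case True
        then show ?thesis using len le'[OF S'] by simp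
      next
        case False
        then have i0: "isol (V - {u}) E = 0" using iso01 by blast
        obtain z where z: "z \<in> V - {u}" "card (cnbh (V - {u}) E z \<inter> (set S - {u})) \<le> 1"
          using zlemma[OF g un S True ne] by blast
        have "set ?S' = set S - {u}" by auto
        then have "card (cnbh (V - {u}) E z \<inter> set ?S') \<le> 1" using z(2) by simp
        then obtain w where "is_DNS (V - {u}) E (?S' @ [w])"
          using extend[OF g' iso0[OF i0] S' z(1)] by blast
        then have "length (?S' @ [w]) \<le> tgr2 (V - {u}) E" using le' by blast
        then show ?thesis using len i0 by simp
      qed
    qed
  qed
  have eq1: "tgr2 V E = tgr2 (V - {u}) E + isol (V - {u}) E"
  proof (rule antisym)
    show "tgr2 V E \<le> tgr2 (V - {u}) E + isol (V - {u}) E" using bound[OF M(1)] M(2) by simp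
    show "tgr2 (V - {u}) E + isol (V - {u}) E \<le> tgr2 V E"
    proof (cases "isol (V - {u}) E = 1")
      case True
      obtain w where w: "w \<in> V - {u}" "cnbh (V - {u}) E w = {w}" using iso1[OF True] by blast
      have "is_DNS V E (M' @ [u])" using snoc_u[OF g un M'(1) w] .
      then have "length (M' @ [u]) \<le> tgr2 V E" using le by blast
      then show ?thesis using True M'(2) by simp
    next
      case False
      then have "isol (V - {u}) E = 0" using iso01 by blast
      moreover have "length M' \<le> tgr2 V E" using le lift[OF M'(1)] by blast
      ultimately show ?thesis using M'(2) by simp
    qed
  qed
  have eq2: "tgr2 V E = gr2 V E" using gr2_eq[OF g noV] by simp
  have p3: "\<forall>S. is_GDDS (V - {u}) E S \<longrightarrow> is_GDDS V E S" if i0: "isol (V - {u}) E = 0"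
  proof (intro allI impI)
    fix S assume S: "is_GDDS (V - {u}) E S"
    have SD: "is_DDS (V - {u}) E S" using S by (simp add: is_GDDS_def)
    have SN: "is_DNS (V - {u}) E S" using SD by (simp add: is_DDS_def)
    have Sc: "\<forall>w\<in>V - {u}. 2 \<le> card (cnbh (V - {u}) E w \<inter> set S)" using SD by (simp add: is_DDS_def)
    have "\<forall>w\<in>V. 2 \<le> card (cnbh V E w \<inter> set S)"
    proof
      fix w assume w: "w \<in> V"
      show "2 \<le> card (cnbh V E w \<inter> set S)"
      proof (cases "w = u")
        case True
        obtain v where v: "v \<in> V - {u}" using ne by blast
        have "cnbh (V - {u}) E v \<inter> set S \<subseteq> cnbh V E w \<inter> set S"
          using True cu cnbh_sub[of "V - {u}" E v] by blast
        then have "card (cnbh (V - {u}) E v \<inter> set S) \<le> card (cnbh V E w \<inter> set S)"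
          by (intro card_mono) simp_all
        moreover have "2 \<le> card (cnbh (V - {u}) E v \<inter> set S)" using Sc v by blast
        ultimately show ?thesis by linarith
      next
        case False
        have "cnbh (V - {u}) E w \<inter> set S \<subseteq> cnbh V E w \<inter> set S"
          by (simp add: cnbh_minus) blast
        then have "card (cnbh (V - {u}) E w \<inter> set S) \<le> card (cnbh V E w \<inter> set S)"
          by (intro card_mono) simp_all
        moreover have "2 \<le> card (cnbh (V - {u}) E w \<inter> set S)" using Sc w False by blast
        ultimately show ?thesis by linarith
      qed
    qed
    then have D: "is_DDS V E S" using lift[OF SN] by (simp add: is_DDS_def)
    obtain D' where D': "is_DDS (V - {u}) E D'" "length D' = tgr2 (V - {u}) E"
      using gr2_eq[OF g' iso0[OF i0]] by blast
    have "length D' \<le> length S" using S D'(1) by (simp add: is_GDDS_def)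
    have "length T \<le> length S" if T: "is_DDS V E T" for T
    proof -
      have "length T \<le> tgr2 V E" using le T by (simp add: is_DDS_def)
      also have "\<dots> = tgr2 (V - {u}) E" using eq1 i0 by simp
      also have "\<dots> \<le> length S" using D'(2) \<open>length D' \<le> length S\<close> by simp
      finally show ?thesis .
    qed
    then show "is_GDDS V E S" using D by (simp add: is_GDDS_def)
  qed
  have p4: "\<forall>S. is_MDNS (V - {u}) E S \<longrightarrow> is_MDNS V E (S @ [u])" if i1: "isol (V - {u}) E = 1"
  proof (intro allI impI)
    fix S assume S: "is_MDNS (V - {u}) E S"
    have SN: "is_DNS (V - {u}) E S" using S by (simp add: is_MDNS_def)
    obtain w where w: "w \<in> V - {u}" "cnbh (V - {u}) E w = {w}" using iso1[OF i1] by blast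
    have D: "is_DNS V E (S @ [u])" using snoc_u[OF g un SN w] .
    have "length M' \<le> length S" using S M'(1) by (simp add: is_MDNS_def)
    have "length T \<le> length (S @ [u])" if T: "is_DNS V E T" for T
    proof -
      have "length T \<le> tgr2 V E" using le T by simp
      also have "\<dots> = tgr2 (V - {u}) E + 1" using eq1 i1 by simp
      also have "\<dots> \<le> length (S @ [u])" using M'(2) \<open>length M' \<le> length S\<close> by simp
      finally show ?thesis .
    qed
    then show "is_MDNS V E (S @ [u])" using D by (simp add: is_MDNS_def)
  qed
  show ?thesis using eq1 eq2 p3 p4 by blast
qed

end
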